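(* Let $\beta\in\mathbb{C}$ and $k\in\mathbb{Z}$ with $\beta\neq k$, and define $f:\mathbb{Z}\times\mathbb{Z}\to\mathbb{C}$ by $f(m,n)=n+k$ if $m+n+k\neq0$ and $f(-n-k,n)=\frac{(n+k)(\beta-n-k)}{\beta-k}$ (the structure constants of the left-symmetric algebra $V^{\beta,k}$ on the Witt algebra with basis $\{x_n\}$, $x_mx_n=f(m,n)x_{m+n}$). Then there is no function $\omega:\mathbb{Z}\times\mathbb{Z}\to\mathbb{C}$ satisfying, for all $m,n,l\in\mathbb{Z}$, $$\omega(m,n)-\omega(n,m)=\tfrac{1}{12}(n^3-n)\delta_{m+n,0},\qquad (n-m)\omega(m+n,l)=\omega(m,n+l)f(n,l)-\omega(n,m+l)f(m,l).$$
   Context: These conditions on $\omega$ are exactly the conditions for the product $\theta\theta=x_m\theta=\theta x_m=0$, $x_mx_n=f(m,n)x_{m+n}+\omega(m,n)\theta$ on $V^{\beta,k}\oplus\mathbb{C}\theta$ to be a left-symmetric algebra (i.e. $(xy)z-x(yz)=(yx)z-y(xz)$) whose commutator is the Virasoro bracket $[x_m,x_n]=(n-m)x_{m+n}+\delta_{m+n,0}\frac{n^3-n}{12}\theta$, $[\theta,x_n]=0$. *)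

theory Defs
  imports Complex_Main
begin

definition Vf :: "complex \<Rightarrow> int \<Rightarrow> int \<Rightarrow> int \<Rightarrow> complex" where
  "Vf \<beta> k m n =
     (if m + n + k \<noteq> 0 then of_int (n + k)
      else of_int (n + k) * (\<beta> - of_int (n + k)) / (\<beta> - of_int k))"

end

theory Submission
  imports Defs
begin

theorem theorem4p2:
  fixes \<beta> :: complex and k :: int
  assumes "\<beta> \<noteq> of_int k"
  shows "\<not> (\<exists>\<omega> :: int \<Rightarrow> int \<Rightarrow> complex.
            (\<forall>m n. \<omega> m n - \<omega> n m =
                    (if m + n = 0 then (of_int n ^ 3 - of_int n) / 12 else 0)) \<and>
            (\<forall>m n l. of_int (n - m) * \<omega> (m + n) l =
                    \<omega> m (n + l) * Vf \<beta> k n l - \<omega> n (m + l) * Vf \<beta> k m l))"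
proof
  assume "\<exists>\<omega> :: int \<Rightarrow> int \<Rightarrow> complex.
            (\<forall>m n. \<omega> m n - \<omega> n m =
                    (if m + n = 0 then (of_int n ^ 3 - of_int n) / 12 else 0)) \<and>
            (\<forall>m n l. of_int (n - m) * \<omega> (m + n) l =
                    \<omega> m (n + l) * Vf \<beta> k n l - \<omega> n (m + l) * Vf \<beta> k m l)"
  then obtain w :: "int \<Rightarrow> int \<Rightarrow> complex" where
    A: "\<forall>m n. w m n - w n m =
                    (if m + n = 0 then (of_int n ^ 3 - of_int n) / 12 else 0)" and
    B: "\<forall>m n l. of_int (n - m) * w (m + n) l =
                    w m (n + l) * Vf \<beta> k n l - w n (m + l) * Vf \<beta> k m l"
    by blast
  define g where "g a = Re (w a (-a))" for a
  have E: "real_of_int (n-m) * g (m+n) = real_of_int (k-m-n) * (g m - g n)"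
    if "m \<noteq> k" "n \<noteq> k" for m n
  proof -
    have "of_int (n - m) * w (m + n) (-m-n) =
            w m (n + (-m-n)) * Vf \<beta> k n (-m-n) - w n (m + (-m-n)) * Vf \<beta> k m (-m-n)"
      using B by blast
    moreover have "Vf \<beta> k n (-m-n) = of_int (k-m-n)" using that by (simp add: Vf_def)
    moreover have "Vf \<beta> k m (-m-n) = of_int (k-m-n)" using that by (simp add: Vf_def)
    ultimately have "of_int (n - m) * w (m + n) (-(m+n)) =
            (w m (-m) - w n (-n)) * of_int (k-m-n)"
      by (simp add: algebra_simps)
    then have "Re (of_int (n - m) * w (m + n) (-(m+n))) =
            Re ((w m (-m) - w n (-n)) * of_int (k-m-n))" by simp
    then show ?thesis unfolding g_def by (simp add: algebra_simps)
  qed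
  have Anti: "g a - g (-a) = (real_of_int a - real_of_int a ^ 3) / 12" for a
  proof -
    define c where "c = a - a^3"
    have "w a (-a) - w (-a) a = (of_int (-a) ^ 3 - of_int (-a)) / 12"
      using A by (metis add.right_inverse)
    also have "\<dots> = of_int c / 12" by (simp add: c_def)
    finally have h: "w a (-a) - w (-a) a = of_int c / 12" .
    have "Re (w a (-a) - w (-a) a) = real_of_int c / 12" unfolding h by simp
    then show ?thesis unfolding g_def c_def by simp
  qed
  have A1: "g 1 - g (-1) = 0" using Anti[of 1] by simp
  have A2: "g 2 - g (-2) = -1/2" using Anti[of 2] by simp
  consider "k = 0" | "k = 1" | "k = -1" | "k = 2" | "k = -2"
    | "k \<noteq> 0 \<and> k \<noteq> 1 \<and> k \<noteq> -1 \<and> k \<noteq> 2 \<and> k \<noteq> -2" by blast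
  then show False
  proof cases
    case 1
    show False using E[of "-2" 5] E[of "-1" 5] E[of 1 3] E[of 1 4] E[of 2 3] A1 A2
      by (simp add: 1; linarith)
  next
    case 2
    show False using E[of "-2" 5] E[of "-1" 2] E[of "-1" 5] E[of 0 3] E[of 0 4] E[of 0 5]
      E[of 2 3] A1 A2
      by (simp add: 2; linarith)
  next
    case 3
    show False using E[of "-2" 1] E[of "-2" 5] E[of 1 2] E[of 1 3] E[of 1 4]
      E[of 2 3] A1 A2
      by (simp add: 3; linarith)
  next
    case 4
    show False using E[of "-2" 5] E[of "-1" 3] E[of "-1" 5] E[of 0 4] E[of 0 5]
      E[of 1 3] E[of 1 4] A1 A2
      by (simp add: 4; linarith)
  next
    case 5
    show False using E[of "-3" 1] E[of "-1" 5] E[of 1 2] E[of 1 3] E[of 1 4]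
      E[of 2 3] A1 A2
      by (simp add: 5; linarith)
  next
    case 6
    have e1: "-2 * g 0 = real_of_int k * (g 1 - g (-1))"
      using E[of 1 "-1"] 6 by simp
    have e2: "-4 * g 0 = real_of_int k * (g 2 - g (-2))"
      using E[of 2 "-2"] 6 by simp
    from e1 A1 have "g 0 = 0" by simp
    with e2 A2 have "real_of_int k = 0" by simp
    with 6 show False by simp
  qed
qed

end
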